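(* Let $a,b\in\mathbb{Z}_{<0}$. Expand $q^{\frac12b}E_{(a,b)}X_1-E_{(a+1,b)}$ as a $\mathbb{Z}[q^{\pm\frac12}]$-linear combination of standard monomials. Then every standard monomial $E_{(c,d)}$ occurring with nonzero coefficient satisfies $c\le a-b+1$ if $d\ge0$, and $c-d\le a-b+1$ if $d<0$.
   Context: Let $\mathcal{T}$ be the quantum torus over $\mathbb{Z}[q^{\pm\frac12}]$ generated by $X_1^{\pm1},X_2^{\pm1}$ with $X_1X_2=qX_2X_1$, with skew field of fractions $\mathcal{F}$. Define $X_k\in\mathcal{F}$ ($k\in\mathbb{Z}$) by $X_{k-1}X_{k+1}=q^{\frac12}X_k+1$ for $k$ odd and $X_{k-1}X_{k+1}=q^2X_k^4+1$ for $k$ even; $\mathcal{A}_q(1,4)$ is the $\mathbb{Z}[q^{\pm\frac12}]$-subalgebra of $\mathcal{F}$ generated by all $X_k$. For $x\in\mathbb{Z}$, $[x]_+=\max(x,0)$. Standard monomials: $E_{(a,b)}=q^{-\frac12ab}X_3^{[-a]_+}X_1^{[a]_+}X_2^{[b]_+}X_0^{[-b]_+}$ for $(a,b)\in\mathbb{Z}^2$; they form a $\mathbb{Z}[q^{\pm\frac12}]$-basis of $\mathcal{A}_q(1,4)$. *)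

theory Defs
  imports "HOL-Library.Poly_Mapping"
begin

text \<open>We write v = q^(1/2). The ring Z[v, v^-1] of Laurent polynomials is
  the group ring of (int,+) over int, i.e. finitely supported maps int => int
  with convolution; vp k is the monomial v^k, so q^(x/2) = vp x.\<close>

type_synonym laur = "int \<Rightarrow>\<^sub>0 int"

definition vp :: "int \<Rightarrow> laur" where
  "vp k = Poly_Mapping.single k 1"

text \<open>Elements of the quantum torus are finite Z[v^+-1]-linear combinations of
  the normally ordered monomials M(m,n) = X1^m X2^n (m, n integers), which form a
  basis.  From X1 X2 = q X2 X1 one gets X2^n X1^m' = q^(-n m') X1^m' X2^n, hence
  M(m,n) M(m',n') = q^(-n m') M(m+m', n+n') = v^(-2 n m') M(m+m',n+n').\<close>

datatype qt = QT (qcoeffs: "(int \<times> int) \<Rightarrow>\<^sub>0 laur")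

instantiation qt :: ab_group_add
begin
definition zero_qt :: qt where "zero_qt = QT 0"
definition plus_qt :: "qt \<Rightarrow> qt \<Rightarrow> qt" where "plus_qt x y = QT (qcoeffs x + qcoeffs y)"
definition minus_qt :: "qt \<Rightarrow> qt \<Rightarrow> qt" where "minus_qt x y = QT (qcoeffs x - qcoeffs y)"
definition uminus_qt :: "qt \<Rightarrow> qt" where "uminus_qt x = QT (- qcoeffs x)"
instance
  by standard (auto simp: zero_qt_def plus_qt_def minus_qt_def uminus_qt_def add.assoc add.commute)
end

instantiation qt :: "{one, times}"
begin
definition one_qt :: qt where "one_qt = QT (Poly_Mapping.single (0,0) 1)"
definition times_qt :: "qt \<Rightarrow> qt \<Rightarrow> qt" where
  "times_qt x y = QT (\<Sum>\<alpha>\<in>Poly_Mapping.keys (qcoeffs x). \<Sum>\<beta>\<in>Poly_Mapping.keys (qcoeffs y).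
     Poly_Mapping.single (fst \<alpha> + fst \<beta>, snd \<alpha> + snd \<beta>)
       (Poly_Mapping.lookup (qcoeffs x) \<alpha> * Poly_Mapping.lookup (qcoeffs y) \<beta> * vp (-2 * snd \<alpha> * fst \<beta>)))"
instance ..
end

primrec qpow :: "qt \<Rightarrow> nat \<Rightarrow> qt" where
  "qpow x 0 = 1"
| "qpow x (Suc n) = x * qpow x n"

definition qsc :: "laur \<Rightarrow> qt" where
  "qsc c = QT (Poly_Mapping.single (0,0) c)"

definition qmon :: "int \<Rightarrow> int \<Rightarrow> qt" where
  "qmon m n = QT (Poly_Mapping.single (m,n) 1)"

definition X1 :: qt where "X1 = qmon 1 0"
definition X2 :: qt where "X2 = qmon 0 1"

definition pos :: "int \<Rightarrow> nat" where "pos x = nat x"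

definition stdmon :: "qt \<Rightarrow> qt \<Rightarrow> int \<times> int \<Rightarrow> qt" where
  "stdmon X0 X3 p = qsc (vp (- fst p * snd p)) *
     (qpow X3 (pos (- fst p)) * qpow X1 (pos (fst p)) * qpow X2 (pos (snd p)) * qpow X0 (pos (- snd p)))"

end

theory Submission
  imports Defs
begin

definition L :: "qt \<Rightarrow> int \<times> int \<Rightarrow> laur" where "L u = Poly_Mapping.lookup (qcoeffs u)"

lemma vp_mult: "vp a * vp b = vp (a+b)" by (simp add: vp_def mult_single)
lemma vp0: "vp 0 = 1" by (simp add: vp_def)
lemma vp_nz: "vp a \<noteq> 0"
  by (metis vp_def lookup_single_eq lookup_zero zero_neq_one)

lemma sum_if_eq: "finite A \<Longrightarrow> (\<Sum>x\<in>A. if x = y then f x else 0) = (if y \<in> A then f y else (0::'b::comm_monoid_add))"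
  by (simp add: sum.delta')

lemma L_notin: "x \<notin> Poly_Mapping.keys (qcoeffs u) \<Longrightarrow> L u x = 0"
  by (simp add: L_def in_keys_iff)

lemma L_times: "L (x*y) \<gamma> = (\<Sum>\<alpha>\<in>Poly_Mapping.keys (qcoeffs x). \<Sum>\<beta>\<in>Poly_Mapping.keys (qcoeffs y).
     if (fst \<alpha> + fst \<beta>, snd \<alpha> + snd \<beta>) = \<gamma> then L x \<alpha> * L y \<beta> * vp (-2 * snd \<alpha> * fst \<beta>) else 0)"
  unfolding L_def times_qt_def by (auto simp add: lookup_sum lookup_single when_def intro!: sum.cong)

lemma L_plus: "L (x + y) g = L x g + L y g"
  by (simp add: L_def plus_qt_def lookup_add)
lemma L_minus: "L (x - y) g = L x g - L y g"
  by (simp add: L_def minus_qt_def lookup_minus)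
lemma L_one: "L 1 g = (if g = (0,0) then 1 else 0)"
  by (auto simp: L_def one_qt_def lookup_single when_def)
lemma L_qmon: "L (qmon m n) g = (if g = (m,n) then 1 else 0)"
  by (auto simp: L_def qmon_def lookup_single when_def)
lemma L_qsc: "L (qsc c) g = (if g = (0,0) then c else 0)"
  by (auto simp: L_def qsc_def lookup_single when_def)
lemma L_zero: "L 0 g = 0"
  by (simp add: L_def zero_qt_def)

lemma L_sum: "L (\<Sum>p\<in>A. f p) g = (\<Sum>p\<in>A. L (f p) g)"
proof (induction A rule: infinite_finite_induct)
  case (infinite A) then show ?case by (simp add: L_zero)
next
  case empty then show ?case by (simp add: L_zero)
next
  case (insert x F) then show ?case by (simp add: L_plus)
qed

lemma keys_qsc: "c \<noteq> 0 \<Longrightarrow> Poly_Mapping.keys (qcoeffs (qsc c)) = {(0,0)}"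
  by (simp add: qsc_def)
lemma keys_qmon: "Poly_Mapping.keys (qcoeffs (qmon m n)) = {(m,n)}"
  by (simp add: qmon_def)

lemma L_qsc_times: "L (qsc c * u) g = c * L u g"
proof (cases "c = 0")
  case True
  then show ?thesis by (simp add: L_times qsc_def)
next
  case False
  have "L (qsc c * u) g = (\<Sum>\<beta>\<in>Poly_Mapping.keys (qcoeffs u).
     if \<beta> = g then c * L u \<beta> else 0)"
    using False by (simp add: L_times keys_qsc L_qsc vp0 cong: if_cong)
  also have "\<dots> = c * L u g" by (simp add: sum_if_eq L_notin)
  finally show ?thesis .
qed

lemma L_times_qmon_right: "L (x * qmon m' n') (fst a + m', snd a + n') = L x a * vp (-2 * snd a * m')"
proof -
  have "L (x * qmon m' n') (fst a + m', snd a + n') = (\<Sum>\<alpha>\<in>Poly_Mapping.keys (qcoeffs x).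
     if \<alpha> = a then L x \<alpha> * vp (-2 * snd \<alpha> * m') else 0)"
    by (auto simp: L_times keys_qmon L_qmon prod_eq_iff intro!: sum.cong)
  also have "\<dots> = L x a * vp (-2 * snd a * m')" by (simp add: sum_if_eq L_notin)
  finally show ?thesis .
qed

lemma L_times_qmon_left: "L (qmon m n * y) (m + fst b, n + snd b) = vp (-2 * n * fst b) * L y b"
proof -
  have "L (qmon m n * y) (m + fst b, n + snd b) = (\<Sum>\<beta>\<in>Poly_Mapping.keys (qcoeffs y).
     if \<beta> = b then vp (-2 * n * fst \<beta>) * L y \<beta> else 0)"
    by (auto simp: L_times keys_qmon L_qmon prod_eq_iff mult.commute intro!: sum.cong)
  also have "\<dots> = vp (-2 * n * fst b) * L y b" by (simp add: sum_if_eq L_notin)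
  finally show ?thesis .
qed

definition good :: "qt \<Rightarrow> int \<Rightarrow> int \<Rightarrow> bool" where
  "good u D d \<longleftrightarrow> (\<forall>m n. L u (m,n) \<noteq> 0 \<longrightarrow> m < D \<or> (m = D \<and> d \<le> n)) \<and> (\<exists>e. L u (D,d) = vp e)"

lemma good_bound: "good u D d \<Longrightarrow> L u (m,n) \<noteq> 0 \<Longrightarrow> m \<le> D"
  unfolding good_def by force

lemma good_times:
  assumes gx: "good x D1 d1" and gy: "good y D2 d2"
  shows "good (x*y) (D1+D2) (d1+d2)"
proof -
  from gx obtain e1 where e1: "L x (D1,d1) = vp e1" by (auto simp: good_def)
  from gy obtain e2 where e2: "L y (D2,d2) = vp e2" by (auto simp: good_def)
  have kx: "\<And>m n. L x (m,n) \<noteq> 0 \<Longrightarrow> m < D1 \<or> (m = D1 \<and> d1 \<le> n)" using gx by (auto simp: good_def)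
  have ky: "\<And>m n. L y (m,n) \<noteq> 0 \<Longrightarrow> m < D2 \<or> (m = D2 \<and> d2 \<le> n)" using gy by (auto simp: good_def)
  have inx: "\<And>a. a \<in> Poly_Mapping.keys (qcoeffs x) \<Longrightarrow> L x a \<noteq> 0" by (simp add: L_def in_keys_iff)
  have iny: "\<And>a. a \<in> Poly_Mapping.keys (qcoeffs y) \<Longrightarrow> L y a \<noteq> 0" by (simp add: L_def in_keys_iff)
  have part1: "m < D1 + D2 \<or> (m = D1 + D2 \<and> d1 + d2 \<le> n)" if nz: "L (x*y) (m,n) \<noteq> 0" for m n
  proof -
    from nz obtain a where a: "a \<in> Poly_Mapping.keys (qcoeffs x)" and
      s: "(\<Sum>\<beta>\<in>Poly_Mapping.keys (qcoeffs y).
     if (fst a + fst \<beta>, snd a + snd \<beta>) = (m,n) then L x a * L y \<beta> * vp (-2 * snd a * fst \<beta>) else 0) \<noteq> 0"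
      unfolding L_times using sum.not_neutral_contains_not_neutral by blast
    from s obtain b where b: "b \<in> Poly_Mapping.keys (qcoeffs y)" and
      t: "(if (fst a + fst b, snd a + snd b) = (m,n) then L x a * L y b * vp (-2 * snd a * fst b) else 0) \<noteq> 0"
      using sum.not_neutral_contains_not_neutral by blast
    from t have eq: "fst a + fst b = m" "snd a + snd b = n" by (auto split: if_splits)
    have "L x (fst a, snd a) \<noteq> 0" using inx[OF a] by simp
    from kx[OF this] have A: "fst a < D1 \<or> (fst a = D1 \<and> d1 \<le> snd a)" .
    have "L y (fst b, snd b) \<noteq> 0" using iny[OF b] by simp
    from ky[OF this] have B: "fst b < D2 \<or> (fst b = D2 \<and> d2 \<le> snd b)" .
    from A B eq show ?thesis by auto
  qed
  have part2: "L (x*y) (D1+D2, d1+d2) = vp (e1 + e2 - 2 * d1 * D2)"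
  proof -
    have "L (x*y) (D1+D2, d1+d2) = (\<Sum>\<alpha>\<in>Poly_Mapping.keys (qcoeffs x). if \<alpha> = (D1,d1) then
       (\<Sum>\<beta>\<in>Poly_Mapping.keys (qcoeffs y). if \<beta> = (D2,d2) then L x \<alpha> * L y \<beta> * vp (-2 * snd \<alpha> * fst \<beta>) else 0) else 0)"
      unfolding L_times
    proof (intro sum.cong refl)
      fix a assume a: "a \<in> Poly_Mapping.keys (qcoeffs x)"
      have A: "fst a < D1 \<or> (fst a = D1 \<and> d1 \<le> snd a)" using kx[of "fst a" "snd a"] inx[OF a] by simp
      show "(\<Sum>\<beta>\<in>Poly_Mapping.keys (qcoeffs y).
         if (fst a + fst \<beta>, snd a + snd \<beta>) = (D1 + D2, d1 + d2) then L x a * L y \<beta> * vp (- 2 * snd a * fst \<beta>) else 0) =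
        (if a = (D1, d1) then \<Sum>\<beta>\<in>Poly_Mapping.keys (qcoeffs y). if \<beta> = (D2, d2) then L x a * L y \<beta> * vp (- 2 * snd a * fst \<beta>) else 0 else 0)"
      proof -
        have "(\<Sum>\<beta>\<in>Poly_Mapping.keys (qcoeffs y).
         if (fst a + fst \<beta>, snd a + snd \<beta>) = (D1 + D2, d1 + d2) then L x a * L y \<beta> * vp (- 2 * snd a * fst \<beta>) else 0)
          = (\<Sum>\<beta>\<in>Poly_Mapping.keys (qcoeffs y). if a = (D1,d1) then (if \<beta> = (D2, d2) then L x a * L y \<beta> * vp (- 2 * snd a * fst \<beta>) else 0) else 0)"
        proof (intro sum.cong refl)
          fix b assume b: "b \<in> Poly_Mapping.keys (qcoeffs y)"
          have B: "fst b < D2 \<or> (fst b = D2 \<and> d2 \<le> snd b)" using ky[of "fst b" "snd b"] iny[OF b] by simp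
          have "(fst a + fst b, snd a + snd b) = (D1 + D2, d1 + d2) \<longleftrightarrow> a = (D1,d1) \<and> b = (D2,d2)"
            using A B by (cases a; cases b) auto
          then show "(if (fst a + fst b, snd a + snd b) = (D1 + D2, d1 + d2) then L x a * L y b * vp (- 2 * snd a * fst b) else 0) =
            (if a = (D1, d1) then if b = (D2, d2) then L x a * L y b * vp (- 2 * snd a * fst b) else 0 else 0)"
            by auto
        qed
        also have "\<dots> = (if a = (D1, d1) then \<Sum>\<beta>\<in>Poly_Mapping.keys (qcoeffs y). if \<beta> = (D2, d2) then L x a * L y \<beta> * vp (- 2 * snd a * fst \<beta>) else 0 else 0)"
          by simp
        finally show ?thesis .
      qed
    qed
    also have "\<dots> = L x (D1,d1) * L y (D2,d2) * vp (-2 * d1 * D2)"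
      by (simp add: sum_if_eq L_notin)
    also have "\<dots> = vp (e1 + e2 - 2 * d1 * D2)" by (simp add: e1 e2 vp_mult)
    finally show ?thesis .
  qed
  show ?thesis unfolding good_def using part1 part2 by blast
qed

lemma good_one: "good 1 0 0"
  by (auto simp: good_def L_one vp0 intro: exI[of _ 0])

lemma good_qmon: "good (qmon m n) m n"
  by (auto simp: good_def L_qmon vp0 intro: exI[of _ 0])

lemma good_qsc: "good (qsc (vp k)) 0 0"
  by (auto simp: good_def L_qsc)

lemma good_qpow: "good x D d \<Longrightarrow> good (qpow x k) (int k * D) (int k * d)"
proof (induction k)
  case 0 then show ?case by (simp add: good_one)
next
  case (Suc k)
  have "good (x * qpow x k) (D + int k * D) (d + int k * d)"
    using good_times[OF Suc.prems Suc.IH[OF Suc.prems]] .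
  then show ?case by (simp add: algebra_simps)
qed

lemma L_X1: "L X1 g = (if g = (1,0) then 1 else 0)" by (simp add: X1_def L_qmon)

lemma good_X0:
  assumes h: "X0 * X2 = qsc (vp 1) * X1 + 1"
  shows "good X0 1 (-1)"
proof -
  have eq: "L X0 (m,n) = vp 1 * (if (m, n+1) = (1,0) then 1 else 0) + (if (m,n+1) = (0,0) then 1 else 0)" for m n
  proof -
    have "L (X0 * qmon 0 1) (fst (m,n) + 0, snd (m,n) + 1) = L X0 (m,n) * vp (-2 * snd (m,n) * 0)"
      by (rule L_times_qmon_right)
    then have "L X0 (m,n) = L (X0 * X2) (m, n+1)" by (simp add: X2_def vp0)
    also have "\<dots> = vp 1 * (if (m, n+1) = (1,0) then 1 else 0) + (if (m,n+1) = (0,0) then 1 else 0)"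
      unfolding h by (simp add: L_plus L_qsc_times L_X1 L_one)
    finally show ?thesis .
  qed
  show ?thesis unfolding good_def
    by (auto simp: eq split: if_splits)
qed

lemma good_X3:
  assumes h: "X1 * X3 = qsc (vp 4) * qpow X2 4 + 1"
  shows "good X3 (-1) 0"
proof -
  have gp: "good (qpow X2 4) 0 4" using good_qpow[OF good_qmon[of 0 1], of 4] by (simp add: X2_def)
  have eq: "L X3 (m,n) = vp 4 * L (qpow X2 4) (1+m, n) + (if (1+m,n) = (0,0) then 1 else 0)" for m n
  proof -
    have "L (qmon 1 0 * X3) (1 + fst (m,n), 0 + snd (m,n)) = vp (-2 * 0 * fst (m,n)) * L X3 (m,n)"
      by (rule L_times_qmon_left)
    then have "L X3 (m,n) = L (X1 * X3) (1+m, n)" by (simp add: X1_def vp0)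
    also have "\<dots> = vp 4 * L (qpow X2 4) (1+m, n) + (if (1+m,n) = (0,0) then 1 else 0)"
      unfolding h by (simp add: L_plus L_qsc_times L_one)
    finally show ?thesis .
  qed
  have gk: "\<And>m n. L (qpow X2 4) (m,n) \<noteq> 0 \<Longrightarrow> m < 0 \<or> (m = 0 \<and> 4 \<le> n)"
    using gp by (auto simp: good_def)
  have z: "L (qpow X2 4) (0,0) = 0" using gk[of 0 0] by auto
  have part1: "m < -1 \<or> (m = -1 \<and> 0 \<le> n)" if "L X3 (m,n) \<noteq> 0" for m n
  proof (cases "L (qpow X2 4) (1+m, n) = 0")
    case True
    then show ?thesis using that by (auto simp: eq split: if_splits)
  next
    case False
    then show ?thesis using gk[OF False] by auto
  qed
  have "L X3 (-1, 0) = vp 0" using eq[of "-1" 0] z by (simp add: vp0)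
  then show ?thesis unfolding good_def using part1 by blast
qed

lemma good_stdmon:
  assumes g0: "good X0 1 (-1)" and g3: "good X3 (-1) 0"
  shows "good (stdmon X0 X3 (e,d)) (e + int (pos (- d))) d"
proof -
  have g1: "good X1 1 0" by (simp add: X1_def good_qmon)
  have g2: "good X2 0 1" by (simp add: X2_def good_qmon)
  have "good (stdmon X0 X3 (e,d)) (0 + (((int (pos (-e)) * (-1) + int (pos e) * 1) + int (pos d) * 0) + int (pos (-d)) * 1))
      (0 + (((int (pos (-e)) * 0 + int (pos e) * 0) + int (pos d) * 1) + int (pos (-d)) * (-1)))"
    unfolding stdmon_def fst_conv snd_conv
    by (intro good_times good_qsc good_qpow g0 g1 g2 g3)
  moreover have "0 + (((int (pos (-e)) * (-1) + int (pos e) * 1) + int (pos d) * 0) + int (pos (-d)) * 1) = e + int (pos (- d))"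
    by (simp add: pos_def)
  moreover have "(0 + (((int (pos (-e)) * 0 + int (pos e) * 0) + int (pos d) * 1) + int (pos (-d)) * (-1))) = d"
    by (simp add: pos_def)
  ultimately show ?thesis by simp
qed

theorem lemma4p4:
  fixes a b :: int and X0 X3 :: qt and c :: "(int \<times> int) \<Rightarrow>\<^sub>0 laur"
  assumes "a < 0" and "b < 0"
    and "X0 * X2 = qsc (vp 1) * X1 + 1"
    and "X1 * X3 = qsc (vp 4) * qpow X2 4 + 1"
    and "qsc (vp b) * stdmon X0 X3 (a, b) * X1 - stdmon X0 X3 (a + 1, b)
           = (\<Sum>p\<in>Poly_Mapping.keys c. qsc (Poly_Mapping.lookup c p) * stdmon X0 X3 p)"
  shows "\<forall>(e, d)\<in>Poly_Mapping.keys c. (0 \<le> d \<longrightarrow> e \<le> a - b + 1) \<and> (d < 0 \<longrightarrow> e - d \<le> a - b + 1)"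
proof (rule ccontr)
  assume neg: "\<not> ?thesis"
  define K where "K = a - b + 1"
  define f where "f = (\<lambda>p::int\<times>int. fst p + int (pos (- snd p)))"
  define S where "S = Poly_Mapping.keys c"
  have g0: "good X0 1 (-1)" by (rule good_X0[OF assms(3)])
  have g3: "good X3 (-1) 0" by (rule good_X3[OF assms(4)])
  have gE: "good (stdmon X0 X3 p) (f p) (snd p)" for p
    using good_stdmon[OF g0 g3, of "fst p" "snd p"] by (simp add: f_def)
  have fin: "finite S" by (simp add: S_def)
  from neg obtain e1 d1 where ed: "(e1,d1) \<in> Poly_Mapping.keys c"
     "\<not> ((0 \<le> d1 \<longrightarrow> e1 \<le> a - b + 1) \<and> (d1 < 0 \<longrightarrow> e1 - d1 \<le> a - b + 1))"
    by auto
  have "f (e1,d1) > K" using ed(2) by (cases "d1 < 0") (auto simp: f_def K_def pos_def)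
  then obtain p1 where p1: "p1 \<in> S" "f p1 > K" using ed(1) by (auto simp: S_def)
  define M where "M = Max (f ` S)"
  have M1: "f p \<le> M" if "p \<in> S" for p using fin that by (simp add: M_def)
  have MK: "M > K" using M1[OF p1(1)] p1(2) by simp
  have Min: "M \<in> f ` S" using fin p1(1) unfolding M_def by (intro Max_in) auto
  define T where "T = {p\<in>S. f p = M}"
  have finT: "finite T" using fin by (simp add: T_def)
  have Tne: "T \<noteq> {}" using Min by (auto simp: T_def)
  define d0 where "d0 = Min (snd ` T)"
  have d0le: "d0 \<le> snd p" if "p \<in> T" for p using finT that by (simp add: d0_def)
  have "d0 \<in> snd ` T" using finT Tne unfolding d0_def by (intro Min_in) auto
  then obtain p0 where p0T: "p0 \<in> T" and p0d: "snd p0 = d0" by auto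
  have p0S: "p0 \<in> S" and fp0: "f p0 = M" using p0T by (auto simp: T_def)
  have uniq: "p = p0" if "p \<in> T" "snd p = d0" for p
  proof -
    have "f p = f p0" using that fp0 by (simp add: T_def)
    then have "fst p = fst p0" using that p0d by (simp add: f_def)
    then show ?thesis using that p0d by (simp add: prod_eq_iff)
  qed
  have zero: "L (stdmon X0 X3 p) (M, d0) = 0" if "p \<in> S" "p \<noteq> p0" for p
  proof (rule ccontr)
    assume nz: "L (stdmon X0 X3 p) (M, d0) \<noteq> 0"
    have "M < f p \<or> (M = f p \<and> snd p \<le> d0)" using gE[of p] nz by (auto simp: good_def)
    then have "f p = M" "snd p \<le> d0" using M1[OF that(1)] by auto
    then have "p \<in> T" using that(1) by (simp add: T_def)
    then have "snd p = d0" using d0le[of p] \<open>snd p \<le> d0\<close> by linarith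
    then show False using uniq \<open>p \<in> T\<close> that(2) by blast
  qed
  obtain e0 where e0: "L (stdmon X0 X3 p0) (M, d0) = vp e0"
    using gE[of p0] fp0 p0d by (auto simp: good_def)
  have "L (\<Sum>p\<in>S. qsc (Poly_Mapping.lookup c p) * stdmon X0 X3 p) (M, d0)
      = (\<Sum>p\<in>S. Poly_Mapping.lookup c p * L (stdmon X0 X3 p) (M, d0))"
    by (simp add: L_sum L_qsc_times)
  also have "\<dots> = Poly_Mapping.lookup c p0 * L (stdmon X0 X3 p0) (M, d0)
      + (\<Sum>p\<in>S - {p0}. Poly_Mapping.lookup c p * L (stdmon X0 X3 p) (M, d0))"
    using fin p0S by (simp add: sum.remove)
  also have "(\<Sum>p\<in>S - {p0}. Poly_Mapping.lookup c p * L (stdmon X0 X3 p) (M, d0)) = 0"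
    using zero by (intro sum.neutral) auto
  finally have R: "L (\<Sum>p\<in>S. qsc (Poly_Mapping.lookup c p) * stdmon X0 X3 p) (M, d0)
      = Poly_Mapping.lookup c p0 * vp e0" by (simp add: e0)
  have cnz: "Poly_Mapping.lookup c p0 \<noteq> 0" using p0S by (simp add: S_def in_keys_iff)
  have "Poly_Mapping.lookup c p0 * vp e0 \<noteq> 0" using cnz vp_nz by simp
  moreover have "L (qsc (vp b) * stdmon X0 X3 (a, b) * X1 - stdmon X0 X3 (a + 1, b)) (M, d0) = 0"
  proof -
    have pb: "int (pos (- b)) = - b" using assms(2) by (simp add: pos_def)
    have ga: "good (qsc (vp b) * stdmon X0 X3 (a, b) * X1) (0 + (a + int (pos (- b))) + 1) (0 + b + 0)"
      by (intro good_times good_qsc good_stdmon[OF g0 g3]) (simp add: X1_def good_qmon)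
    have gb: "good (stdmon X0 X3 (a + 1, b)) (a + 1 + int (pos (- b))) b"
      by (rule good_stdmon[OF g0 g3])
    have "L (qsc (vp b) * stdmon X0 X3 (a, b) * X1) (M, d0) = 0"
      using good_bound[OF ga, of M d0] MK pb by (auto simp: K_def)
    moreover have "L (stdmon X0 X3 (a + 1, b)) (M, d0) = 0"
      using good_bound[OF gb, of M d0] MK pb by (auto simp: K_def)
    ultimately show ?thesis by (simp add: L_minus)
  qed
  ultimately show False using R assms(5) by (simp add: S_def)
qed

end
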